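(* For every integer $k\ge1$, $N(2k+4,k)=2$ if $3\mid k$ and $N(2k+4,k)=0$ if $3\nmid k$.
   Context: For $n>k\ge1$, $N(n,k)$ is the nullity of the $n\times n$ skew-symmetric Toeplitz matrix $A(n,k)$ whose first $k$ superdiagonals have all entries $1$ and whose remaining superdiagonals have all entries $0$. *)

theory Defs
  imports Complex_Main "Jordan_Normal_Form.Matrix_Kernel"
begin

definition skewA :: "nat \<Rightarrow> nat \<Rightarrow> real mat" where
  "skewA n k = mat n n (\<lambda>(i, j).
      if i < j \<and> j - i \<le> k then 1
      else if j < i \<and> i - j \<le> k then -1
      else 0)"

definition nullityN :: "nat \<Rightarrow> nat \<Rightarrow> nat" where
  "nullityN n k = kernel_dim (skewA n k)"

end

theory Submission
  imports Defs
begin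

definition R :: "nat \<Rightarrow> (nat \<Rightarrow> real) \<Rightarrow> nat \<Rightarrow> real" where
  "R k f i = (\<Sum>j\<in>{Suc i..i+k}. f j) - (\<Sum>j\<in>{i-k..<i}. f j)"

lemma row_split:
  fixes f :: "nat \<Rightarrow> real"
  assumes f0: "\<And>j. j \<ge> n \<Longrightarrow> f j = 0" and i: "i < n"
  shows "(\<Sum>j<n. (if i < j \<and> j - i \<le> k then 1
      else if j < i \<and> i - j \<le> k then -1 else 0) * f j) = R k f i"
proof -
  have "(\<Sum>j<n. (if i < j \<and> j - i \<le> k then 1
      else if j < i \<and> i - j \<le> k then -1 else 0) * f j)
    = (\<Sum>j<n. (if i < j \<and> j - i \<le> k then f j else 0)) - (\<Sum>j<n. (if j < i \<and> i - j \<le> k then f j else 0))"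
    by (subst sum_subtractf[symmetric], rule sum.cong, auto)
  also have "(\<Sum>j<n. (if i < j \<and> j - i \<le> k then f j else 0)) = (\<Sum>j\<in>{j\<in>{..<n}. i < j \<and> j - i \<le> k}. f j)"
    by (rule sum.inter_filter[symmetric]) simp
  also have "\<dots> = (\<Sum>j\<in>{Suc i..i+k}. f j)"
    apply (rule sum.mono_neutral_left) apply auto
    using f0 not_less by metis
  also have "(\<Sum>j<n. (if j < i \<and> i - j \<le> k then f j else 0)) = (\<Sum>j\<in>{j\<in>{..<n}. j < i \<and> i - j \<le> k}. f j)"
    by (rule sum.inter_filter[symmetric]) simp
  also have "{j\<in>{..<n}. j < i \<and> i - j \<le> k} = {i-k..<i}" using i by auto
  finally show ?thesis unfolding R_def .
qed

lemma R_diff: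
  fixes f :: "nat \<Rightarrow> real"
  assumes "k \<ge> 1"
  shows "R k f (Suc i) - R k f i = f (i+k+1) - f (i+1) - f i + (if k \<le> i then f (i-k) else 0)"
proof -
  have a: "(\<Sum>j\<in>{Suc (Suc i)..Suc i+k}. f j) = (\<Sum>j\<in>{Suc i..i+k}. f j) + f (i+k+1) - f (i+1)"
  proof -
    have "(\<Sum>j\<in>{Suc i..Suc i+k}. f j) = (\<Sum>j\<in>{Suc i..i+k}. f j) + f (i+k+1)"
      using assms by simp  
    moreover have "(\<Sum>j\<in>{Suc i..Suc i+k}. f j) = f (Suc i) + (\<Sum>j\<in>{Suc (Suc i)..Suc i+k}. f j)"
      by (simp add: sum.atLeast_Suc_atMost)
    ultimately show ?thesis by simp
  qed
  have b: "(\<Sum>j\<in>{Suc i - k..<Suc i}. f j) = (\<Sum>j\<in>{i-k..<i}. f j) + f i - (if k \<le> i then f (i-k) else 0)"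
  proof (cases "k \<le> i")
    case True
    have "(\<Sum>j\<in>{i-k..<Suc i}. f j) = (\<Sum>j\<in>{i-k..<i}. f j) + f i" by simp
    moreover have "(\<Sum>j\<in>{i-k..<Suc i}. f j) = f (i-k) + (\<Sum>j\<in>{Suc (i-k)..<Suc i}. f j)"
      by (rule sum.atLeast_Suc_lessThan) simp
    moreover have "Suc i - k = Suc (i-k)" using True assms by simp
    ultimately show ?thesis using True by simp
  next
    case False
    then show ?thesis by simp
  qed
  show ?thesis unfolding R_def using a b by simp
qed
definition P :: "real \<Rightarrow> real \<Rightarrow> nat \<Rightarrow> real" where
  "P a b j = (if j mod 3 = 0 then b else if j mod 3 = 1 then -a-b else a)"

lemma P_add3: "P a b (j + 3*q) = P a b j"
  unfolding P_def by simp

lemma P_add3': "P a b (3*q + j) = P a b j"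
  unfolding P_def by simp

lemma P_012[simp]: "P a b 0 = b" "P a b (Suc 0) = -a-b" "P a b 2 = a"
  unfolding P_def by auto

definition W :: "nat \<Rightarrow> real \<Rightarrow> real \<Rightarrow> nat \<Rightarrow> real" where
  "W k a b j = (if j = 0 then 0 else if j \<le> k then P a b j else if j = k+1 then P a b 1
     else if j \<le> 2*k+2 then - P a b (j+1) else 0)"

lemma P_3q[simp]: fixes q :: nat shows "P a b (3*q) = b" "P a b (3*q+1) = -a-b" "P a b (3*q+2) = a" "P a b (Suc (3*q)) = -a-b" "P a b (Suc (Suc (3*q))) = a"
  by (simp_all add: P_def mod_Suc)

lemma P_rec: "P a b j + P a b (Suc j) + P a b (Suc (Suc j)) = 0"
  unfolding P_def by (auto simp: mod_Suc)

lemma P_sum: "(\<Sum>j\<in>{1..3*q}. P a b j) = 0"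
proof (induction q)
  case 0 then show ?case by simp
next
  case (Suc q)
  have "{1..3*Suc q} = {1..3*q} \<union> {3*q+1, 3*q+2, 3*q+3}" by auto
  then have "(\<Sum>j\<in>{1..3*Suc q}. P a b j) = (\<Sum>j\<in>{1..3*q}. P a b j) + (P a b (3*q+1) + P a b (3*q+2) + P a b (3*q+3))"
    by (simp add: sum.union_disjoint)
  also have "P a b (3*q+1) + P a b (3*q+2) + P a b (3*q+3) = 0"
    by (simp add: P_def mod_Suc)
  finally show ?case using Suc by simp
qed

lemma P_sum1: fixes q :: nat shows "(\<Sum>j\<in>{1..3*q+1}. P a b j) = -a-b"
  using P_sum[where q=q and a=a and b=b] by simp

lemma P_sum2: fixes q :: nat shows "(\<Sum>j\<in>{1..3*q+2}. P a b j) = -b"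
proof -
  have "(\<Sum>j\<in>{1..Suc (3*q+1)}. P a b j) = (\<Sum>j\<in>{1..3*q+1}. P a b j) + P a b (3*q+2)" by simp
  then show ?thesis using P_sum1[where q=q and a=a and b=b] by simp
qed

locale sys =
  fixes k :: nat and f :: "nat \<Rightarrow> real"
  assumes k3: "k \<ge> 3"
    and H0: "\<And>j. j \<ge> 2*k+4 \<Longrightarrow> f j = 0"
    and HS: "(\<Sum>j\<in>{1..k}. f j) = 0"
    and HD: "\<And>i. Suc i < 2*k+4 \<Longrightarrow> f (i+k+1) + (if k \<le> i then f (i-k) else 0) = f i + f (i+1)"
begin

lemma T: assumes "2 \<le> m" "m+2 \<le> k" shows "f m + f (m+1) + f (m+2) = 0"
proof -
  have 1: "f (m+k+1) = f m + f (m+1)" using HD[of m] assms by simp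
  have 2: "f (m+1+k+1) = f (m+1) + f (m+2)" using HD[of "m+1"] assms by simp
  have 3: "f (m+1+k+k+1) + f (m+1) = f (m+1+k) + f (m+1+k+1)" using HD[of "m+1+k"] assms by simp
  have 4: "f (m+1+k+k+1) = 0" using assms by (intro H0) simp
  have 5: "m+1+k = m+k+1" by simp
  show ?thesis using 1 2 3 4 unfolding 5 by linarith
qed

definition "a = f 2"
definition "b = f 3"

lemma per: "2 \<le> j \<Longrightarrow> j \<le> k \<Longrightarrow> f j = P a b j"
proof (induction j rule: less_induct)
  case (less j)
  show ?case
  proof (cases "j \<le> 3")
    case True
    then have "j = 2 \<or> j = 3" using less by auto
    then show ?thesis by (auto simp: P_def a_def b_def)
  next
    case False
    define m where "m = j - 2"
    have m: "j = m + 2" "2 \<le> m" using False unfolding m_def by auto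
    have "f m + f (m+1) + f (m+2) = 0" using T[of m] m less by simp
    moreover have "f m = P a b m" using less m by simp
    moreover have "f (m+1) = P a b (m+1)" using less m by simp
    moreover have "P a b m + P a b (m+1) + P a b (m+2) = 0" using P_rec[of a b m] by simp
    ultimately show ?thesis using m by simp
  qed
qed

lemma U1: "f (k-1) + f k + f 1 = 0"
proof -
  have 1: "f k = f (k+k) + f (k+k+1)" using HD[of "k+k"] H0[of "k+k+k+1"] k3 by (simp add: eval_nat_numeral)
  have 2: "f (k+k) = f (k-1) + f k" using HD[of "k-1"] k3 by (auto split: if_splits)
  have 3: "f (k+k+1) + f 0 = f k + f (k+1)" using HD[of k] by simp
  have 4: "f (k+1) = f 0 + f 1" using HD[of 0] k3 by (simp add: eval_nat_numeral)
  show ?thesis using 1 2 3 4 by linarith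
qed

lemma U2: "f k + f 1 + f 2 = 0"
proof -
  have 1: "f (k+1) = f (k+k+1) + f (k+k+2)" using HD[of "k+k+1"] H0[of "k+k+1+k+1"] k3 by (simp add: eval_nat_numeral)
  have 2: "f (k+k+2) + f 1 = f (k+1) + f (k+2)" using HD[of "k+1"] k3 by (simp add: eval_nat_numeral)
  have 3: "f (k+k+1) + f 0 = f k + f (k+1)" using HD[of k] by simp
  have 4: "f (k+1) = f 0 + f 1" using HD[of 0] k3 by (simp add: eval_nat_numeral)
  have 5: "f (k+2) = f 1 + f 2" using HD[of 1] k3 by (simp add: eval_nat_numeral)
  show ?thesis using 1 2 3 4 5 by simp
qed

lemma U3: "f 0 + f 1 + f 2 + f 3 = 0"
proof -
  have 1: "f (k+2) = f (k+k+2) + f (k+k+3)" using HD[of "k+k+2"] H0[of "k+k+2+k+1"] k3 by (simp add: eval_nat_numeral)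
  have 2: "f (k+k+2) + f 1 = f (k+1) + f (k+2)" using HD[of "k+1"] k3 by (simp add: eval_nat_numeral)
  have 3: "f (k+k+3) + f 2 = f (k+2) + f (k+3)" using HD[of "k+2"] k3 by (simp add: eval_nat_numeral)
  have 4: "f (k+1) = f 0 + f 1" using HD[of 0] k3 by (simp add: eval_nat_numeral)
  have 5: "f (k+2) = f 1 + f 2" using HD[of 1] k3 by (simp add: eval_nat_numeral)
  have 6: "f (k+3) = f 2 + f 3" using HD[of 2] k3 by (simp add: eval_nat_numeral)
  show ?thesis using 1 2 3 4 5 6 by simp
qed

lemma sumP: "(\<Sum>j\<in>{1..k}. f j) = f 1 - P a b 1 + (\<Sum>j\<in>{1..k}. P a b j)"
proof -
  have "(\<Sum>j\<in>{1..k}. f j) = f 1 + (\<Sum>j\<in>{Suc 1..k}. f j)"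
    using k3 by (subst sum.atLeast_Suc_atMost) auto
  moreover have "(\<Sum>j\<in>{1..k}. P a b j) = P a b 1 + (\<Sum>j\<in>{Suc 1..k}. P a b j)"
    using k3 by (subst sum.atLeast_Suc_atMost) auto
  moreover have "(\<Sum>j\<in>{Suc 1..k}. f j) = (\<Sum>j\<in>{Suc 1..k}. P a b j)"
    by (rule sum.cong) (auto intro: per)
  ultimately show ?thesis by simp
qed

lemma step: assumes "k+1 \<le> j" "j \<le> 2*k+3"
  shows "f j = f (j-k-1) + f (j-k) - (if k \<le> j-k-1 then f (j-k-1-k) else 0)"
proof -
  have "f (j-k-1+k+1) + (if k \<le> j-k-1 then f (j-k-1-k) else 0) = f (j-k-1) + f (j-k-1+1)"
    using HD[of "j-k-1"] assms by simp
  moreover have "j-k-1+k+1 = j" "j-k-1+1 = j-k" using assms by auto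
  ultimately show ?thesis by simp
qed

lemma nondvd: assumes "\<not> 3 dvd k" shows "f j = 0"
proof -
  have ab: "a = 0 \<and> b = 0 \<and> f 1 = 0"
  proof -
    define q where "q = k div 3"
    have "k mod 3 \<noteq> 0" using assms by (simp add: dvd_eq_mod_eq_0)
    moreover have "k = 3*q + k mod 3" unfolding q_def by simp
    ultimately have q: "k = 3*q+1 \<or> k = 3*q+2" by linarith
    have u1: "f (k-1) + f k + f 1 = 0" by (rule U1)
    have u2: "f k + f 1 + f 2 = 0" by (rule U2)
    have s: "f 1 - P a b 1 + (\<Sum>j\<in>{1..k}. P a b j) = 0" using sumP HS by simp
    have a2: "f 2 = a" by (simp add: a_def)
    from q show ?thesis
    proof
      assume k: "k = 3*q+1"
      have "f (k-1) = P a b (3*q)" using per[of "k-1"] k k3 by simp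
      moreover have "f k = P a b (3*q+1)" using per[of k] k k3 by simp
      moreover have "(\<Sum>j\<in>{1..k}. P a b j) = -a-b" using k P_sum1 by simp
      ultimately show ?thesis using u1 u2 s a2 by simp
    next
      assume k: "k = 3*q+2"
      have "f (k-1) = P a b (3*q+1)" using per[of "k-1"] k k3 by simp
      moreover have "f k = P a b (3*q+2)" using per[of k] k k3 by simp
      moreover have "(\<Sum>j\<in>{1..k}. P a b j) = -b" using k P_sum2 by simp
      ultimately show ?thesis using u1 u2 s a2 by simp
    qed
  qed
  have f0: "f 0 = 0" using U3 ab by (simp add: a_def b_def)
  show ?thesis
  proof (induction j rule: less_induct)
    case (less j)
    consider "j = 0" | "j = 1" | "2 \<le> j \<and> j \<le> k" | "k+1 \<le> j \<and> j \<le> 2*k+3" | "2*k+4 \<le> j" by linarith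
    then show ?case
    proof cases
      case 3 then show ?thesis using per[of j] ab by (simp add: P_def)
    next
      case 4
      then have "f j = f (j-k-1) + f (j-k) - (if k \<le> j-k-1 then f (j-k-1-k) else 0)" using step by simp
      moreover have "j-k-1 < j" "j-k < j" "j-k-1-k < j" using 4 k3 by auto
      then have "f (j-k-1) = 0" "f (j-k) = 0" "f (j-k-1-k) = 0" using less.IH by blast+
      ultimately show ?thesis by simp
    qed (use ab f0 H0 in auto)
  qed
qed

lemma dvdcase: assumes "3 dvd k" shows "f j = W k a b j"
proof -
  obtain q where k: "k = 3*q" using assms by auto
  have fk: "f k = b" using per[of k] k k3 by simp
  have f1: "f 1 = -a-b" using U2 fk by (simp add: a_def)
  have f0: "f 0 = 0" using U3 f1 by (simp add: a_def b_def)
  have fi: "f i = P a b i" if "1 \<le> i" "i \<le> k" for i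
  proof (cases "i = 1")
    case True then show ?thesis using f1 by simp
  next
    case False then show ?thesis using per that by simp
  qed
  consider "j = 0" | "1 \<le> j \<and> j \<le> k" | "j = k+1" | "k+2 \<le> j \<and> j \<le> 2*k" | "j = 2*k+1" | "j = 2*k+2" | "j = 2*k+3" | "2*k+4 \<le> j" by linarith
  then show ?thesis
  proof cases
    case 1 then show ?thesis using f0 by (simp add: W_def)
  next
    case 2 then show ?thesis using fi by (simp add: W_def)
  next
    case 3 then show ?thesis using step[of j] f0 f1 k3 by (simp add: W_def)
  next
    case 4
    define i where "i = j-k-1"
    have i: "1 \<le> i" "i+1 \<le> k" "j = i + k + 1" using 4 unfolding i_def by auto
    have "f j = f i + f (i+1)" using step[of j] 4 i by simp
    also have "\<dots> = P a b i + P a b (i+1)" using fi i by simp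
    also have "\<dots> = - P a b (i+2)" using P_rec[of a b i] by simp
    also have "P a b (i+2) = P a b (j+1)" using i k P_add3'[of a b q "i+2"] by (simp add: algebra_simps)
    finally show ?thesis using 4 by (simp add: W_def)
  next
    case 5
    have "f (k+1) = f 0 + f 1" using step[of "k+1"] k3 by simp
    moreover have "f j = f k + f (k+1) - f 0" using step[of j] 5 by simp
    moreover have "W k a b j = - a" using 5 k k3 by (simp add: W_def P_def mod_Suc)
    ultimately show ?thesis using f0 f1 fk by simp
  next
    case 6
    have "f (k+1) = f 0 + f 1" using step[of "k+1"] k3 by simp
    moreover have "f (k+2) = f 1 + f 2" using step[of "k+2"] k3 by (simp add: eval_nat_numeral)
    moreover have "f j = f (k+1) + f (k+2) - f 1" using step[of j] 6 by (simp add: eval_nat_numeral)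
    moreover have "W k a b j = - b" using 6 k k3 by (simp add: W_def P_def mod_Suc)
    ultimately show ?thesis using f0 f1 by (simp add: a_def)
  next
    case 7
    have "f (k+2) = f 1 + f 2" using step[of "k+2"] k3 by (simp add: eval_nat_numeral)
    moreover have "f (k+3) = f 2 + f 3" using step[of "k+3"] k3 by (simp add: eval_nat_numeral)
    moreover have "f j = f (k+2) + f (k+3) - f 2" using step[of j] 7 by (simp add: eval_nat_numeral)
    moreover have "W k a b j = 0" using 7 k k3 by (simp add: W_def P_def mod_Suc)
    ultimately show ?thesis using f0 f1 by (simp add: a_def b_def)
  next
    case 8 then show ?thesis using H0 by (simp add: W_def)
  qed
qed
end

lemma W_sys: assumes "3 dvd k" "k \<ge> 3" shows "sys k (W k a b)"
proof
  obtain q where k: "k = 3*q" using assms by auto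
  show "k \<ge> 3" by fact
  show "W k a b j = 0" if "j \<ge> 2*k+4" for j using that by (simp add: W_def)
  have "(\<Sum>j\<in>{1..k}. W k a b j) = (\<Sum>j\<in>{1..k}. P a b j)"
    by (rule sum.cong) (auto simp: W_def)
  also have "\<dots> = 0" using k P_sum by simp
  finally show "(\<Sum>j\<in>{1..k}. W k a b j) = 0" .
  fix i assume i: "Suc i < 2*k+4"
  have Pk: "P a b (x + k) = P a b x" for x using k P_add3[of a b x q] by simp
  consider "i = 0" | "1 \<le> i \<and> i+1 \<le> k" | "i = k" | "i = k+1" | "i = k+2" | "k+3 \<le> i \<and> i \<le> 2*k" | "i = 2*k+1" | "i = 2*k+2"
    using i by linarith
  then show "W k a b (i+k+1) + (if k \<le> i then W k a b (i-k) else 0) = W k a b i + W k a b (i+1)"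
  proof cases
    case 1 then show ?thesis using assms by (simp add: W_def)
  next
    case 2
    have "P a b (i+k+2) = P a b (i+2)" using Pk[of "i+2"] by (simp add: algebra_simps)
    then show ?thesis using 2 P_rec[of a b i] by (simp add: W_def)
  next
    case 3 then show ?thesis using k assms by (simp add: W_def P_def mod_Suc)
  next
    case 4 then show ?thesis using k assms by (simp add: W_def P_def mod_Suc)
  next
    case 5 then show ?thesis using k assms by (simp add: W_def P_def mod_Suc)
  next
    case 6
    have "P a b (i-k) = P a b i" using Pk[of "i-k"] 6 by simp
    moreover have "i-k \<noteq> 0" "i - k \<le> k" "\<not> k \<le> i - k - 1 \<or> i-k \<le> k" using 6 by auto
    ultimately show ?thesis using 6 P_rec[of a b i] by (simp add: W_def)
  next
    case 7 then show ?thesis using k assms by (simp add: W_def P_def mod_Suc)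
  next
    case 8 then show ?thesis using k assms by (simp add: W_def P_def mod_Suc)
  qed
qed


definition ext :: "nat \<Rightarrow> real vec \<Rightarrow> nat \<Rightarrow> real" where
  "ext n v j = (if j < n then v $ j else 0)"

lemma R0: "R k f 0 = (\<Sum>j\<in>{1..k}. f j)"
  unfolding R_def by simp

lemma R_iff:
  fixes f :: "nat \<Rightarrow> real"
  assumes k: "k \<ge> 1" and n: "n \<ge> 1"
  shows "(\<forall>i<n. R k f i = 0) \<longleftrightarrow> ((\<Sum>j\<in>{1..k}. f j) = 0 \<and>
     (\<forall>i. Suc i < n \<longrightarrow> f (i+k+1) + (if k \<le> i then f (i-k) else 0) = f i + f (i+1)))"
proof
  assume A: "\<forall>i<n. R k f i = 0"
  show "(\<Sum>j\<in>{1..k}. f j) = 0 \<and>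
     (\<forall>i. Suc i < n \<longrightarrow> f (i+k+1) + (if k \<le> i then f (i-k) else 0) = f i + f (i+1))"
  proof (intro conjI allI impI)
    show "(\<Sum>j\<in>{1..k}. f j) = 0" using A n R0[of k f] by auto
    fix i assume i: "Suc i < n"
    have "R k f (Suc i) - R k f i = 0" using A i by simp
    then show "f (i+k+1) + (if k \<le> i then f (i-k) else 0) = f i + f (i+1)"
      using R_diff[OF k, of f i] by simp
  qed
next
  assume B: "(\<Sum>j\<in>{1..k}. f j) = 0 \<and>
     (\<forall>i. Suc i < n \<longrightarrow> f (i+k+1) + (if k \<le> i then f (i-k) else 0) = f i + f (i+1))"
  have "i < n \<longrightarrow> R k f i = 0" for i
  proof (induction i)
    case 0 then show ?case using B R0[of k f] by simp
  next
    case (Suc i)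
    show ?case
    proof
      assume i: "Suc i < n"
      then have "f (i+k+1) + (if k \<le> i then f (i-k) else 0) = f i + f (i+1)" using B by blast
      then have "R k f (Suc i) - R k f i = 0" using R_diff[OF k, of f i] by simp
      then show "R k f (Suc i) = 0" using Suc i by simp
    qed
  qed
  then show "\<forall>i<n. R k f i = 0" by blast
qed

lemma skew_carrier: "skewA n k \<in> carrier_mat n n"
  unfolding skewA_def by simp

lemma mult_eq: assumes v: "v \<in> carrier_vec n" and i: "i < n"
  shows "(skewA n k *\<^sub>v v) $ i = (\<Sum>j<n. (if i < j \<and> j - i \<le> k then 1
      else if j < i \<and> i - j \<le> k then -1 else 0) * v $ j)"
  using v i unfolding skewA_def by (auto simp: scalar_prod_def lessThan_atLeast0 intro!: sum.cong)

lemma mult_R: assumes v: "v \<in> carrier_vec n" and i: "i < n"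
  shows "(skewA n k *\<^sub>v v) $ i = R k (ext n v) i"
proof -
  have "(skewA n k *\<^sub>v v) $ i = (\<Sum>j<n. (if i < j \<and> j - i \<le> k then 1
      else if j < i \<and> i - j \<le> k then -1 else 0) * ext n v j)"
    unfolding mult_eq[OF v i] by (rule sum.cong) (auto simp: ext_def)
  also have "\<dots> = R k (ext n v) i" by (rule row_split) (auto simp: ext_def i)
  finally show ?thesis .
qed

lemma ker_iff:
  assumes k: "k \<ge> 1" and n: "n \<ge> 1" and v: "v \<in> carrier_vec n"
  shows "v \<in> mat_kernel (skewA n k) \<longleftrightarrow> ((\<Sum>j\<in>{1..k}. ext n v j) = 0 \<and>
     (\<forall>i. Suc i < n \<longrightarrow> ext n v (i+k+1) + (if k \<le> i then ext n v (i-k) else 0) = ext n v i + ext n v (i+1)))"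
proof -
  have "v \<in> mat_kernel (skewA n k) \<longleftrightarrow> skewA n k *\<^sub>v v = 0\<^sub>v n"
    using v skew_carrier[of n k] unfolding mat_kernel_def by auto
  also have "\<dots> \<longleftrightarrow> (\<forall>i<n. (skewA n k *\<^sub>v v) $ i = 0)"
  proof -
    have d: "dim_vec (skewA n k *\<^sub>v v) = n" using skew_carrier[of n k] by simp
    have d2: "dim_row (skewA n k) = n" using skew_carrier[of n k] by simp
    show ?thesis by (auto simp: vec_eq_iff d d2 simp del: index_mult_mat_vec)
  qed
  also have "\<dots> \<longleftrightarrow> (\<forall>i<n. R k (ext n v) i = 0)"
    using mult_R[OF v] by auto
  finally show ?thesis using R_iff[OF k n, of "ext n v"] by simp
qed


lemma small_zero:
  fixes f :: "nat \<Rightarrow> real"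
  assumes k: "k = 1 \<or> k = 2"
    and H0: "\<And>j. j \<ge> 2*k+4 \<Longrightarrow> f j = 0"
    and HS: "(\<Sum>j\<in>{1..k}. f j) = 0"
    and HD: "\<And>i. Suc i < 2*k+4 \<Longrightarrow> f (i+k+1) + (if k \<le> i then f (i-k) else 0) = f i + f (i+1)"
  shows "f j = 0"
  using k
proof
  assume k1: "k = 1"
  have "f 6 = 0" using H0 k1 by simp
  moreover have "f 1 = 0" using HS k1 by simp
  moreover have "f 2 = f 0 + f 1" using HD[of 0] k1 by (simp add: eval_nat_numeral)
  moreover have "f 3 + f 0 = f 1 + f 2" using HD[of 1] k1 by (simp add: eval_nat_numeral)
  moreover have "f 4 + f 1 = f 2 + f 3" using HD[of 2] k1 by (simp add: eval_nat_numeral)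
  moreover have "f 5 + f 2 = f 3 + f 4" using HD[of 3] k1 by (simp add: eval_nat_numeral)
  moreover have "f 6 + f 3 = f 4 + f 5" using HD[of 4] k1 by (simp add: eval_nat_numeral)
  ultimately have z: "f 0 = 0 \<and> f 1 = 0 \<and> f 2 = 0 \<and> f 3 = 0 \<and> f 4 = 0 \<and> f 5 = 0" by linarith
  consider "j = 0" | "j = 1" | "j = 2" | "j = 3" | "j = 4" | "j = 5" | "j \<ge> 6" by linarith
  then show ?thesis by cases (use z H0 k1 in auto)
next
  assume k2: "k = 2"
  have "f 8 = 0" "f 9 = 0" using H0 k2 by simp_all
  moreover have "f 1 + f 2 = 0" using HS k2 by (simp add: eval_nat_numeral)
  moreover have "f 3 = f 0 + f 1" using HD[of 0] k2 by (simp add: eval_nat_numeral)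
  moreover have "f 4 = f 1 + f 2" using HD[of 1] k2 by (simp add: eval_nat_numeral)
  moreover have "f 5 + f 0 = f 2 + f 3" using HD[of 2] k2 by (simp add: eval_nat_numeral)
  moreover have "f 6 + f 1 = f 3 + f 4" using HD[of 3] k2 by (simp add: eval_nat_numeral)
  moreover have "f 7 + f 2 = f 4 + f 5" using HD[of 4] k2 by (simp add: eval_nat_numeral)
  moreover have "f 8 + f 3 = f 5 + f 6" using HD[of 5] k2 by (simp add: eval_nat_numeral)
  moreover have "f 9 + f 4 = f 6 + f 7" using HD[of 6] k2 by (simp add: eval_nat_numeral)
  ultimately have z: "f 0 = 0 \<and> f 1 = 0 \<and> f 2 = 0 \<and> f 3 = 0 \<and> f 4 = 0 \<and> f 5 = 0 \<and> f 6 = 0 \<and> f 7 = 0" by linarith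
  consider "j = 0" | "j = 1" | "j = 2" | "j = 3" | "j = 4" | "j = 5" | "j = 6" | "j = 7" | "j \<ge> 8" by linarith
  then show ?thesis by cases (use z H0 k2 in auto)
qed

lemma ext_vec: "(\<And>j. j \<ge> n \<Longrightarrow> g j = 0) \<Longrightarrow> ext n (vec n g) = g"
  by (auto simp: ext_def fun_eq_iff)

lemma ext_H0: "j \<ge> n \<Longrightarrow> ext n v j = 0" by (simp add: ext_def)

lemma P_lin: "P a b j = a * P 1 0 j + b * P 0 1 j"
  unfolding P_def by auto

lemma W_lin: "W k a b j = a * W k 1 0 j + b * W k 0 1 j"
proof -
  note L = P_lin[of a b j] P_lin[of a b 1] P_lin[of a b "j+1"]
  show ?thesis
    by (cases "j=0"; cases "j \<le> k"; cases "j = k+1"; cases "j \<le> 2*k+2") (simp_all only: W_def L if_True if_False, simp_all)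
qed

theorem theorem8p4:
  fixes k :: nat
  assumes "k \<ge> 1"
  shows "nullityN (2 * k + 4) k = (if 3 dvd k then 2 else 0)"
proof -
  define n where "n = 2*k+4"
  have n1: "n \<ge> 1" unfolding n_def by simp
  interpret K: kernel n n "skewA n k" by unfold_locales (rule skew_carrier)
  have nd: "nullityN (2 * k + 4) k = K.Ker.dim"
    unfolding nullityN_def n_def[symmetric] by simp
  have KI: "(\<Sum>j\<in>{1..k}. ext n v j) = 0 \<and> (\<forall>i. Suc i < 2*k+4 \<longrightarrow>
      ext n v (i+k+1) + (if k \<le> i then ext n v (i-k) else 0) = ext n v i + ext n v (i+1))"
    if v: "v \<in> mat_kernel (skewA n k)" for v
  proof -
    have vc: "v \<in> carrier_vec n" using v mat_kernelD[OF skew_carrier] by blast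
    have "(\<Sum>j\<in>{1..k}. ext n v j) = 0 \<and> (\<forall>i. Suc i < n \<longrightarrow>
      ext n v (i+k+1) + (if k \<le> i then ext n v (i-k) else 0) = ext n v i + ext n v (i+1))"
      using ker_iff[OF assms n1 vc] v by blast
    then show ?thesis unfolding n_def .
  qed
  have sysI: "sys k (ext n v)" if v: "v \<in> mat_kernel (skewA n k)" and k3: "k \<ge> 3" for v
  proof
    show "k \<ge> 3" by (rule k3)
    show "ext n v j = 0" if "j \<ge> 2*k+4" for j using that by (simp add: ext_H0 n_def)
    show "(\<Sum>j\<in>{1..k}. ext n v j) = 0" using KI[OF v] by blast
    show "ext n v (i+k+1) + (if k \<le> i then ext n v (i-k) else 0) = ext n v i + ext n v (i+1)"
      if "Suc i < 2*k+4" for i using KI[OF v] that by blast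
  qed
  show ?thesis
  proof (cases "3 dvd k")
    case False
    have zero: "v = 0\<^sub>v n" if v: "v \<in> mat_kernel (skewA n k)" for v
    proof -
      have vc: "v \<in> carrier_vec n" using v mat_kernelD[OF skew_carrier] by blast
      have fz: "ext n v j = 0" for j
      proof (cases "k \<ge> 3")
        case True
        then show ?thesis using sys.nondvd[OF sysI[OF v True] False] by simp
      next
        case False
        then have k12: "k = 1 \<or> k = 2" using assms by auto
        show ?thesis
        proof (rule small_zero[OF k12])
          show "ext n v j = 0" if "j \<ge> 2*k+4" for j using that by (simp add: ext_H0 n_def)
          show "(\<Sum>j\<in>{1..k}. ext n v j) = 0" using KI[OF v] by blast
          show "ext n v (i+k+1) + (if k \<le> i then ext n v (i-k) else 0) = ext n v i + ext n v (i+1)"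
            if "Suc i < 2*k+4" for i using KI[OF v] that by blast
        qed
      qed
      show ?thesis
      proof (rule eq_vecI)
        show "dim_vec v = dim_vec (0\<^sub>v n :: real vec)" using vc by simp
        fix i assume "i < dim_vec (0\<^sub>v n :: real vec)"
        then have i: "i < n" by simp
        have "v $ i = ext n v i" using i by (simp add: ext_def)
        then show "v $ i = 0\<^sub>v n $ i" using fz[of i] i by simp
      qed
    qed
    have "mat_kernel (skewA n k) = {0\<^sub>v n}"
      using zero K.Ker.zero_closed by auto
    then have "K.Ker.gen_set {}" using K.Ker.span_empty by simp
    then have "K.Ker.dim \<le> 0" using K.Ker.gen_ge_dim[of "{}"] by simp
    then show ?thesis using nd False by simp
  next
    case True
    have k3: "k \<ge> 3" using True assms by (auto dest: dvd_imp_le)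
    define w1 where "w1 = vec n (W k 1 0)"
    define w2 where "w2 = vec n (W k 0 1)"
    have Wz: "W k a b j = 0" if "j \<ge> n" for a b j using that by (simp add: W_def n_def)
    have ew1: "ext n w1 = W k 1 0" unfolding w1_def by (rule ext_vec) (rule Wz)
    have ew2: "ext n w2 = W k 0 1" unfolding w2_def by (rule ext_vec) (rule Wz)
    have inker: "vec n (W k a b) \<in> mat_kernel (skewA n k)" for a b
    proof -
      have e: "ext n (vec n (W k a b)) = W k a b" by (rule ext_vec) (rule Wz)
      have s: "sys k (W k a b)" by (rule W_sys[OF True k3])
      have "(\<Sum>j\<in>{1..k}. W k a b j) = 0 \<and> (\<forall>i. Suc i < n \<longrightarrow>
        W k a b (i+k+1) + (if k \<le> i then W k a b (i-k) else 0) = W k a b i + W k a b (i+1))"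
      proof (intro conjI allI impI)
        show "(\<Sum>j\<in>{1..k}. W k a b j) = 0" by (rule sys.HS[OF s])
        fix i assume "Suc i < n"
        then have "Suc i < 2*k+4" unfolding n_def .
        then show "W k a b (i+k+1) + (if k \<le> i then W k a b (i-k) else 0) = W k a b i + W k a b (i+1)"
          by (rule sys.HD[OF s])
      qed
      then show ?thesis unfolding ker_iff[OF assms n1 vec_carrier] e .
    qed
    have w1k: "w1 \<in> mat_kernel (skewA n k)" unfolding w1_def by (rule inker)
    have w2k: "w2 \<in> mat_kernel (skewA n k)" unfolding w2_def by (rule inker)
    have w1c: "w1 \<in> carrier_vec n" and w2c: "w2 \<in> carrier_vec n" unfolding w1_def w2_def by auto
    have w12: "w1 $ 2 = 1" "w2 $ 2 = 0" "w1 $ 3 = 0" "w2 $ 3 = 1"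
      using k3 by (auto simp: w1_def w2_def n_def W_def P_def)
    have ne: "w1 \<noteq> w2" using w12 by auto
    have lc: "K.Ker.lincomb c {w1, w2} = c w1 \<cdot>\<^sub>v w1 + c w2 \<cdot>\<^sub>v w2" for c
    proof -
      have "K.Ker.lincomb c {w1, w2} = c w1 \<cdot>\<^sub>v w1 + K.Ker.lincomb c {w2}"
        using ne w1k w2k by (subst K.Ker.lincomb_insert2) auto
      also have "K.Ker.lincomb c {w2} = c w2 \<cdot>\<^sub>v w2 + K.Ker.lincomb c {}"
        using w2k by (subst K.Ker.lincomb_insert2) auto
      also have "K.Ker.lincomb c {} = 0\<^sub>v n" by simp
      finally show ?thesis using w2c by simp
    qed
    have li: "K.Ker.lin_indpt {w1, w2}"
    proof (rule K.Ker.finite_lin_indpt2)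
      show "finite {w1, w2}" by simp
      show "{w1, w2} \<subseteq> mat_kernel (skewA n k)" using w1k w2k by auto
      fix c assume "c \<in> {w1, w2} \<rightarrow> UNIV" and z: "K.Ker.lincomb c {w1, w2} = 0\<^sub>v n"
      have z2: "(c w1 \<cdot>\<^sub>v w1 + c w2 \<cdot>\<^sub>v w2) $ 2 = 0" "(c w1 \<cdot>\<^sub>v w1 + c w2 \<cdot>\<^sub>v w2) $ 3 = 0"
        using z[unfolded lc] k3 by (auto simp: n_def)
      then have "c w1 = 0" "c w2 = 0" using w12 w1c w2c k3 by (auto simp: n_def)
      then show "\<forall>v\<in>{w1, w2}. c v = 0" by auto
    qed
    have gen: "K.Ker.span {w1, w2} = mat_kernel (skewA n k)"
    proof (rule equalityI)
      show "K.Ker.span {w1, w2} \<subseteq> mat_kernel (skewA n k)"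
        using w1k w2k by (intro K.Ker.span_is_subset2) auto
      show "mat_kernel (skewA n k) \<subseteq> K.Ker.span {w1, w2}"
      proof
        fix x assume x: "x \<in> mat_kernel (skewA n k)"
        have xc: "x \<in> carrier_vec n" using x mat_kernelD[OF skew_carrier] by blast
        have s: "sys k (ext n x)" by (rule sysI[OF x k3])
        have fx: "ext n x j = W k (ext n x 2) (ext n x 3) j" for j
          using sys.dvdcase[OF s True, of j] unfolding sys.a_def[OF s] sys.b_def[OF s] .
        define c where "c = (\<lambda>v. if v = w1 then ext n x 2 else ext n x 3)"
        have "x = c w1 \<cdot>\<^sub>v w1 + c w2 \<cdot>\<^sub>v w2"
        proof (rule eq_vecI)
          show "dim_vec x = dim_vec (c w1 \<cdot>\<^sub>v w1 + c w2 \<cdot>\<^sub>v w2)" using xc w1c w2c by simp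
          fix i assume "i < dim_vec (c w1 \<cdot>\<^sub>v w1 + c w2 \<cdot>\<^sub>v w2)"
          then have i: "i < n" using w2c by simp
          have "x $ i = ext n x i" using i by (simp add: ext_def)
          also have "\<dots> = W k (ext n x 2) (ext n x 3) i" by (rule fx)
          also have "\<dots> = ext n x 2 * W k 1 0 i + ext n x 3 * W k 0 1 i" by (rule W_lin)
          finally show "x $ i = (c w1 \<cdot>\<^sub>v w1 + c w2 \<cdot>\<^sub>v w2) $ i"
            using i w1c w2c ne by (simp add: c_def w1_def w2_def)
        qed
        then have "x = K.Ker.lincomb c {w1, w2}" by (simp add: lc)
        moreover have "K.Ker.lincomb c {w1, w2} \<in> K.Ker.span {w1, w2}"
          unfolding K.Ker.span_def by blast
        ultimately show "x \<in> K.Ker.span {w1, w2}" by simp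
      qed
    qed
    have "K.Ker.basis {w1, w2}" unfolding K.Ker.basis_def using li gen w1k w2k by auto
    then have "K.Ker.dim = card {w1, w2}" by (intro K.Ker.dim_basis) auto
    then show ?thesis using nd True ne by simp
  qed
qed

end
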